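(* Let $\beta\in(0,n)$, $q>0$, $1\le p<n/\beta$ and $q_0>0$. Then the following statements are equivalent. 1. For all $f\in C_0^\infty(\mathbb{R}^n)$: $$\|f\|_{L^{\frac{np}{n-p\beta},q_0}(\mathbb{R}^n)}\lesssim\|f\|_{L^{p,q_0}(\mathbb{R}^n;C^{p,q}_\beta)}.$$ 2. For every bounded domain $O\subset\mathbb{R}^n$ with $C^\infty$ boundary: $$V(O)^{\frac{n-p\beta}{n}}\lesssim C^{p,q}_\beta(\overline{O}).$$ Moreover, when $q\ge p$, both (i) and (ii) hold.
   Context: $C_0^\infty(\mathbb{R}^n)$ is the space of compactly supported smooth functions, $V$ is Lebesgue measure on $\mathbb{R}^n$, and $1_E$ is the characteristic function of $E$. Implicit constants are independent of $f$ and $O$. Besov norm: let $k=1+\lfloor\beta\rfloor$, $\Delta^1_h f(x)=f(x+h)-f(x)$ and $\Delta^k_h=\Delta^1_h\Delta^{k-1}_h$. Then $$\|f\|_{\dot{\Lambda}^{p,q}_\beta(\mathbb{R}^n)}=\left(\int_{\mathbb{R}^n}\|\Delta^k_h f\|_{L^p}^q|h|^{-(n+\beta q)}dh\right)^{1/q}.$$ Besov capacity: for compact $K$, $$C^{p,q}_\beta(K)=\inf\{\|f\|^p_{\dot{\Lambda}^{p,q}_\beta}: f\in C_0^\infty(\mathbb{R}^n),\ f\ge 1_K\}.$$ For arbitrary $E$, $$C^{p,q}_\beta(E)=\inf_{O\supseteq E\text{ open}}\sup_{K\subseteq O\text{ compact}}C^{p,q}_\beta(K).$$ Lorentz quasinorms: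 for $\nu$ a measure or set function, and $O_t(g)=\{x:|g(x)|>t\}$, $$\|g\|_{L^{s,q_0}(\mathbb{R}^n;\nu)}=\left(\int_0^\infty\nu(O_t(g))^{q_0/s}\,d(t^{q_0})\right)^{1/q_0}.$$ When no $\nu$ is indicated, $\nu=V$. *)

theory Defs
  imports "HOL-Analysis.Analysis"
begin

text \<open>Real powers of extended nonnegative reals (used only with positive exponents).\<close>
definition ennpow :: "ennreal \<Rightarrow> real \<Rightarrow> ennreal" where
  "ennpow x r = (if x = \<infinity> then (if r > 0 then \<infinity> else if r = 0 then 1 else 0)
                 else ennreal (enn2real x powr r))"

text \<open>C-infinity functions R^n -> R: f lies in a family of everywhere differentiable
  functions closed under taking partial derivatives along the standard basis.\<close>
definition smooth_fun :: "('a::euclidean_space \<Rightarrow> real) \<Rightarrow> bool" where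
  "smooth_fun f \<longleftrightarrow> (\<exists>S. f \<in> S \<and> (\<forall>g\<in>S. \<forall>x. g differentiable (at x)) \<and>
      (\<forall>g\<in>S. \<forall>i\<in>Basis. (\<lambda>x. frechet_derivative g (at x) i) \<in> S))"

definition C0_inf :: "('a::euclidean_space \<Rightarrow> real) set" where
  "C0_inf = {f. smooth_fun f \<and> compact (closure {x. f x \<noteq> 0})}"

fun fdiff :: "nat \<Rightarrow> 'a::real_vector \<Rightarrow> ('a \<Rightarrow> real) \<Rightarrow> 'a \<Rightarrow> real" where
  "fdiff 0 h f = f"
| "fdiff (Suc k) h f = (\<lambda>x. fdiff k h f (x + h) - fdiff k h f x)"

definition Lp_norm :: "real \<Rightarrow> ('a::euclidean_space \<Rightarrow> real) \<Rightarrow> ennreal" where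
  "Lp_norm p g = ennpow (\<integral>\<^sup>+ x. ennreal (\<bar>g x\<bar> powr p) \<partial>lborel) (1 / p)"

definition besov_norm :: "real \<Rightarrow> real \<Rightarrow> real \<Rightarrow> ('a::euclidean_space \<Rightarrow> real) \<Rightarrow> ennreal" where
  "besov_norm p q \<beta> f =
     ennpow (\<integral>\<^sup>+ h. ennpow (Lp_norm p (fdiff (nat (1 + \<lfloor>\<beta>\<rfloor>)) h f)) q
                       * ennreal (norm h powr (- (real DIM('a) + \<beta> * q))) \<partial>lborel) (1 / q)"

definition besov_capK :: "real \<Rightarrow> real \<Rightarrow> real \<Rightarrow> 'a::euclidean_space set \<Rightarrow> ennreal" where
  "besov_capK p q \<beta> K =
     (INF f \<in> {f \<in> C0_inf. \<forall>x. indicator K x \<le> f x}. ennpow (besov_norm p q \<beta> f) p)"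

definition besov_cap :: "real \<Rightarrow> real \<Rightarrow> real \<Rightarrow> 'a::euclidean_space set \<Rightarrow> ennreal" where
  "besov_cap p q \<beta> E =
     (INF U \<in> {U. open U \<and> E \<subseteq> U}. SUP K \<in> {K. compact K \<and> K \<subseteq> U}. besov_capK p q \<beta> K)"

text \<open>Lorentz quasinorm w.r.t. a set function nu; d(t^q0) = q0 t^(q0-1) dt on (0,inf).\<close>
definition lorentz_norm :: "real \<Rightarrow> real \<Rightarrow> ('a set \<Rightarrow> ennreal) \<Rightarrow> ('a \<Rightarrow> real) \<Rightarrow> ennreal" where
  "lorentz_norm s q0 \<nu> g =
     ennpow (\<integral>\<^sup>+ t \<in> {0<..}. ennpow (\<nu> {x. \<bar>g x\<bar> > t}) (q0 / s)
                 * ennreal (q0 * t powr (q0 - 1)) \<partial>lborel) (1 / q0)"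

definition smooth_bdd_domain :: "'a::euclidean_space set \<Rightarrow> bool" where
  "smooth_bdd_domain U \<longleftrightarrow> open U \<and> connected U \<and> U \<noteq> {} \<and> bounded U \<and>
     (\<forall>x0\<in>frontier U. \<exists>r>0. \<exists>\<rho>. smooth_fun \<rho> \<and>
        U \<inter> ball x0 r = {x \<in> ball x0 r. \<rho> x < 0} \<and>
        (\<forall>x\<in>ball x0 r. frechet_derivative \<rho> (at x) \<noteq> (\<lambda>v. 0)))"

end

theory Submission
  imports Defs
begin

lemma fdiff_bound:
  fixes f :: "'a::real_vector \<Rightarrow> real"
  assumes "\<And>j. j \<le> k \<Longrightarrow> \<bar>f (y + real j *\<^sub>R h)\<bar> \<le> B"
  shows "\<bar>fdiff k h f y\<bar> \<le> 2^k * B"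
  using assms
proof (induction k arbitrary: y)
  case 0
  then show ?case using 0[of 0] by simp
next
  case (Suc k)
  have e: "y + h + real j *\<^sub>R h = y + real (Suc j) *\<^sub>R h" for j
    by (simp add: algebra_simps)
  have a: "\<bar>fdiff k h f (y + h)\<bar> \<le> 2^k * B"
    by (rule Suc.IH) (metis e Suc.prems Suc_le_mono)
  have b: "\<bar>fdiff k h f y\<bar> \<le> 2^k * B"
    using Suc.IH[of y] Suc.prems by simp
  show ?case using a b by simp
qed

lemma fdiff_main:
  fixes f :: "'a::real_vector \<Rightarrow> real"
  assumes "\<And>j. 1 \<le> j \<Longrightarrow> j \<le> k \<Longrightarrow> \<bar>f (x + real j *\<^sub>R h)\<bar> \<le> B"
  shows "\<bar>fdiff k h f x - (-1)^k * f x\<bar> \<le> (2^k - 1) * B"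
  using assms
proof (induction k)
  case 0
  then show ?case by simp
next
  case (Suc k)
  have a: "\<bar>fdiff k h f (x + h)\<bar> \<le> 2^k * B"
  proof (rule fdiff_bound)
    fix j assume "j \<le> k"
    have e: "x + h + real j *\<^sub>R h = x + real (Suc j) *\<^sub>R h"
      by (simp add: algebra_simps)
    show "\<bar>f (x + h + real j *\<^sub>R h)\<bar> \<le> B" unfolding e
      by (rule Suc.prems) (use \<open>j \<le> k\<close> in auto)
  qed
  have b: "\<bar>fdiff k h f x - (-1)^k * f x\<bar> \<le> (2^k - 1) * B"
    using Suc.IH Suc.prems by simp
  have "fdiff (Suc k) h f x - (-1)^(Suc k) * f x = fdiff k h f (x + h) - (fdiff k h f x - (-1)^k * f x)"
    by simp
  then show ?case using a b abs_triangle_ineq4[of "fdiff k h f (x + h)" "fdiff k h f x - (-1)^k * f x"]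
    by (simp add: algebra_simps)
qed

lemma ennpow_ennreal: "x \<ge> 0 \<Longrightarrow> ennpow (ennreal x) r = ennreal (x powr r)"
  by (simp add: ennpow_def)

lemma ennpow_0: "r > 0 \<Longrightarrow> ennpow 0 r = 0"
  by (simp add: ennpow_def)

lemma ennpow_mono:
  assumes "r > 0" "x \<le> y" shows "ennpow x r \<le> ennpow y r"
proof (cases "y = \<infinity>")
  case True then show ?thesis using assms by (simp add: ennpow_def)
next
  case False
  then have "x \<noteq> \<infinity>" using assms top.extremum_unique by fastforce
  obtain a where "x = ennreal a" "a \<ge> 0"
    using \<open>x \<noteq> \<infinity>\<close> by (cases x rule: ennreal_cases) auto
  moreover obtain b where "y = ennreal b" "b \<ge> 0"
    using False by (cases y rule: ennreal_cases) auto
  ultimately show ?thesis using assms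
    by (auto simp add: ennpow_def ennreal_le_iff2 intro: powr_mono2)
qed

lemma ennpow_lower:
  assumes "r > 0" "a \<ge> 0" "ennreal a \<le> x" shows "ennreal (a powr r) \<le> ennpow x r"
  using ennpow_mono[OF assms(1,3)] assms by (simp add: ennpow_ennreal)

lemma ennpow_mult:
  assumes "c > 0" "r > 0" shows "ennpow (ennreal c * x) r = ennreal (c powr r) * ennpow x r"
proof (cases "x = \<infinity>")
  case True then show ?thesis using assms by (simp add: ennpow_def ennreal_mult_top)
next
  case False
  then obtain a where "x = ennreal a" "a \<ge> 0" by (cases x rule: ennreal_cases) auto
  then have eq: "ennreal c * x = ennreal (c * a)" using assms by (simp add: ennreal_mult)
  have "ennpow (ennreal c * x) r = ennreal ((c * a) powr r)"
    unfolding eq by (rule ennpow_ennreal) (use assms \<open>a \<ge> 0\<close> in simp)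
  also have "\<dots> = ennreal (c powr r) * ennreal (a powr r)"
    using assms \<open>a \<ge> 0\<close> by (simp add: powr_mult ennreal_mult)
  also have "ennreal (a powr r) = ennpow x r"
    using \<open>x = ennreal a\<close> \<open>a \<ge> 0\<close> by (simp add: ennpow_ennreal)
  finally show ?thesis .
qed

lemma ennpow_ennpow:
  assumes "a > 0" "b > 0" shows "ennpow (ennpow x a) b = ennpow x (a * b)"
proof (cases "x = \<infinity>")
  case True then show ?thesis using assms by (simp add: ennpow_def)
next
  case False
  then obtain y where "x = ennreal y" "y \<ge> 0" by (cases x rule: ennreal_cases) auto
  then show ?thesis using assms
    by (simp add: ennpow_def powr_powr)
qed


lemma nn_integral_cmult_le:
  assumes "c \<ge> 0"
  shows "(\<integral>\<^sup>+x. ennreal c * g x \<partial>M) \<le> ennreal c * (\<integral>\<^sup>+x. g x \<partial>M)"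
proof (cases "c = 0")
  case True then show ?thesis by simp
next
  case False
  then have c: "c > 0" using assms by simp
  show ?thesis
    unfolding nn_integral_def[of M "\<lambda>x. ennreal c * g x"]
  proof (rule SUP_least)
    fix s assume "s \<in> {s. simple_function M s \<and> s \<le> (\<lambda>x. ennreal c * g x)}"
    then have s: "simple_function M s" "\<And>x. s x \<le> ennreal c * g x" by (auto simp: le_fun_def)
    define s' where "s' x = ennreal (1/c) * s x" for x
    have ss: "simple_function M s'" unfolding s'_def
      using s(1) by (intro simple_function_mult simple_function_const)
    have cc: "ennreal c * ennreal (1/c) = 1" using c by (simp add: ennreal_mult[symmetric])
    have "s' x \<le> g x" for x
    proof -
      have "s' x \<le> ennreal (1/c) * (ennreal c * g x)" unfolding s'_def
        using s(2) by (intro mult_left_mono) auto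
      also have "\<dots> = g x" using cc by (simp add: mult.assoc[symmetric] mult.commute)
      finally show ?thesis .
    qed
    have seq: "s x = ennreal c * s' x" for x
      unfolding s'_def using cc by (simp add: mult.assoc[symmetric])
    have "integral\<^sup>S M s = ennreal c * integral\<^sup>S M s'"
    proof -
      have "s = (\<lambda>x. ennreal c * s' x)" using seq by (rule ext)
      then show ?thesis using simple_integral_mult[OF ss, of "ennreal c"] by simp
    qed
    moreover have "integral\<^sup>S M s' \<le> integral\<^sup>N M g"
      unfolding nn_integral_def
      by (rule SUP_upper) (use ss \<open>\<And>x. s' x \<le> g x\<close> in \<open>auto simp: le_fun_def\<close>)
    ultimately show "integral\<^sup>S M s \<le> ennreal c * integral\<^sup>N M g"
      by (simp add: mult_left_mono)
  qed
qed


lemma scale_pre: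
  fixes x :: "'a::euclidean_space"
  assumes A: "A \<in> sets borel" and c: "c \<ge> 1"
  shows "emeasure lborel {h. x + c *\<^sub>R h \<in> A} \<le> emeasure lborel A"
proof -
  have c0: "c \<noteq> 0" using c by simp
  have m: "(\<lambda>h. x + c *\<^sub>R h) \<in> borel_measurable borel" by simp
  have "emeasure lborel A = emeasure (density (distr lborel borel (\<lambda>h. x + c *\<^sub>R h)) (\<lambda>_. \<bar>c\<bar>^DIM('a))) A"
    using lborel_affine[OF c0, of x] by simp
  also have "\<dots> = ennreal (\<bar>c\<bar>^DIM('a)) * emeasure lborel {h. x + c *\<^sub>R h \<in> A}"
    using A by (simp add: emeasure_density nn_integral_cmult_indicator emeasure_distr vimage_def)
  finally have eq: "emeasure lborel A = ennreal (\<bar>c\<bar>^DIM('a)) * emeasure lborel {h. x + c *\<^sub>R h \<in> A}" .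
  have "1 \<le> ennreal (\<bar>c\<bar>^DIM('a))" using c by (simp add: one_le_power)
  then have "1 * emeasure lborel {h. x + c *\<^sub>R h \<in> A} \<le> ennreal (\<bar>c\<bar>^DIM('a)) * emeasure lborel {h. x + c *\<^sub>R h \<in> A}"
    by (rule mult_right_mono) simp
  then show ?thesis using eq by simp
qed

lemma sec_bound:
  fixes x :: "'a::euclidean_space"
  assumes A: "A \<in> sets borel" and B: "B \<in> sets borel"
  shows "emeasure lborel B \<le> emeasure lborel {h \<in> B. \<forall>j\<in>{1..k}. x + real j *\<^sub>R h \<notin> A} + of_nat k * emeasure lborel A"
proof -
  define P where "P j = {h. x + real j *\<^sub>R h \<in> A}" for j :: nat
  have P: "P j \<in> sets borel" for j unfolding P_def using A by measurable
  have S: "{h \<in> B. \<forall>j\<in>{1..k}. x + real j *\<^sub>R h \<notin> A} \<in> sets borel"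
    using A B by measurable
  have "B \<subseteq> {h \<in> B. \<forall>j\<in>{1..k}. x + real j *\<^sub>R h \<notin> A} \<union> (\<Union>j\<in>{1..k}. P j)"
    unfolding P_def by auto
  then have "emeasure lborel B \<le> emeasure lborel ({h \<in> B. \<forall>j\<in>{1..k}. x + real j *\<^sub>R h \<notin> A} \<union> (\<Union>j\<in>{1..k}. P j))"
    by (intro emeasure_mono) (use S P in auto)
  also have "\<dots> \<le> emeasure lborel {h \<in> B. \<forall>j\<in>{1..k}. x + real j *\<^sub>R h \<notin> A} + emeasure lborel (\<Union>j\<in>{1..k}. P j)"
    by (intro emeasure_subadditive) (use S P in auto)
  also have "emeasure lborel (\<Union>j\<in>{1..k}. P j) \<le> (\<Sum>j\<in>{1..k}. emeasure lborel (P j))"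
    by (intro emeasure_subadditive_finite) (use P in auto)
  also have "\<dots> \<le> (\<Sum>j\<in>{1..k}. emeasure lborel A)"
    by (intro sum_mono) (unfold P_def, rule scale_pre[OF A], auto)
  also have "\<dots> = of_nat k * emeasure lborel A" by simp
  finally show ?thesis by (simp add: add_left_mono)
qed


lemma ennreal_cancel_aux:
  assumes "ennreal a \<le> X + ennreal b" "X \<le> ennreal c" "b \<ge> 0"
  shows "ennreal (a - b) \<le> X"
proof -
  obtain s where s: "X = ennreal s" "s \<ge> 0"
    using assms(2) by (cases X rule: ennreal_cases) (auto simp: top_unique)
  have "ennreal a \<le> ennreal (s + b)" using assms(1) s assms(3) by (simp add: ennreal_plus)
  then have "a \<le> s + b \<or> a \<le> 0" by (auto simp add: ennreal_le_iff2)
  then show ?thesis using s assms(3) by (auto simp: ennreal_le_iff2)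
qed

lemma direct_estimate:
  fixes f :: "'a::euclidean_space \<Rightarrow> real" and K :: "'a set"
  assumes fm: "f \<in> borel_measurable borel" and f0: "\<And>x. f x \<ge> 0"
    and t: "t > 0" and K: "K \<in> sets borel" and fK: "\<And>x. x \<in> K \<Longrightarrow> t \<le> f x"
    and m: "emeasure lborel K = ennreal m" "m > 0"
    and M: "M > 0" and k: "k \<ge> 1"
    and eps: "eps = 1 / 2^(k+1)"
    and A: "emeasure lborel {x. eps * t < f x} \<le> ennreal (M * m)"
    and p: "p \<ge> 1" and q: "q > 0" and b: "\<beta> \<ge> 0"
  shows "ennreal ((2 powr (-q) * 4 powr (-(q/p)) * (2*k*M/unit_ball_vol (real DIM('a))) powr (-1 - \<beta>*q/real DIM('a)) * (k*M/2))
            * t powr q * m powr (q/p - \<beta>*q/real DIM('a)))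
     \<le> (\<integral>\<^sup>+h. ennpow (Lp_norm p (fdiff k h f)) q * ennreal (norm h powr (-(real DIM('a) + \<beta>*q))) \<partial>lborel)"
    (is "ennreal ?L \<le> _")
proof -
  define n where "n = real DIM('a)"
  define \<omega> where "\<omega> = unit_ball_vol n"
  have n: "n > 0" unfolding n_def by simp
  have \<omega>: "\<omega> > 0" unfolding \<omega>_def using n by simp
  define \<rho> where "\<rho> = (2*k*M*m/\<omega>) powr (1/n)"
  have kM: "real k * M > 0" using k M by simp
  have X: "2*k*M*m/\<omega> > 0" using kM k M m \<omega> by (intro divide_pos_pos mult_pos_pos) (auto simp: mult.assoc)
  have \<rho>: "\<rho> > 0" unfolding \<rho>_def using X by (rule powr_gt_zero[THEN iffD2, OF less_imp_neq[symmetric]])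
  have \<rho>n: "\<rho> ^ DIM('a) = 2*k*M*m/\<omega>"
  proof -
    have "\<rho> ^ DIM('a) = \<rho> powr n" unfolding n_def using \<rho> by (simp add: powr_realpow)
    also have "\<dots> = (2*k*M*m/\<omega>) powr (1/n * n)" unfolding \<rho>_def by (rule powr_powr)
    also have "\<dots> = (2*k*M*m/\<omega>) powr 1" using n by simp
    also have "\<dots> = 2*k*M*m/\<omega>" using X by (rule powr_one[OF less_imp_le])
    finally show ?thesis .
  qed
  define B' where "B' = cball (0::'a) \<rho> - {0}"
  have B'b: "B' \<in> sets borel" unfolding B'_def by simp
  have VB: "emeasure lborel B' = ennreal (2*k*M*m)"
  proof -
    have "emeasure lborel (cball (0::'a) \<rho>) = ennreal (2*k*M*m)"
      using \<rho> \<omega> by (simp add: emeasure_cball \<rho>n \<omega>_def[symmetric] n_def[symmetric])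
    moreover have "emeasure lborel B' \<le> emeasure lborel (cball (0::'a) \<rho>)"
      unfolding B'_def by (intro emeasure_mono) auto
    moreover have "emeasure lborel (cball (0::'a) \<rho>) \<le> emeasure lborel (B' \<union> {0})"
      unfolding B'_def by (intro emeasure_mono) auto
    moreover have "emeasure lborel (B' \<union> {0}) \<le> emeasure lborel B' + emeasure lborel {0::'a}"
      by (intro emeasure_subadditive) (use B'b in auto)
    ultimately show ?thesis by (metis add.right_neutral antisym emeasure_lborel_singleton order.trans)
  qed
  define Aset where "Aset = {x. eps * t < f x}"
  have Ab: "Aset \<in> sets borel" unfolding Aset_def using fm by measurable
  define E where "E = {z::'a\<times>'a. fst z \<in> B' \<and> snd z \<in> K \<and> (\<forall>j\<in>{1..k}. snd z + real j *\<^sub>R fst z \<notin> Aset)}"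
  have Eb0: "{z \<in> space (borel \<Otimes>\<^sub>M borel). fst z \<in> B' \<and> snd z \<in> K \<and>
      (\<forall>j\<in>{1..k}. \<not> eps * t < f (snd z + real j *\<^sub>R fst z))} \<in> sets (borel \<Otimes>\<^sub>M borel)"
    using B'b K fm by measurable
  have Eb: "E \<in> sets (borel \<Otimes>\<^sub>M borel)"
    using Eb0 unfolding E_def Aset_def by (simp add: space_pair_measure)
  have EM: "E \<in> sets (lborel \<Otimes>\<^sub>M lborel)"
    using Eb by (simp add: sets_pair_measure_cong[OF sets_lborel sets_lborel])
  have sec: "ennreal (k*M*m) \<le> emeasure lborel ((\<lambda>h. (h, x)) -` E)" if x: "x \<in> K" for x
  proof -
    have eq: "(\<lambda>h. (h, x)) -` E = {h \<in> B'. \<forall>j\<in>{1..k}. x + real j *\<^sub>R h \<notin> Aset}"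
      unfolding E_def using x by auto
    have "ennreal (2*k*M*m) \<le> emeasure lborel {h \<in> B'. \<forall>j\<in>{1..k}. x + real j *\<^sub>R h \<notin> Aset} + of_nat k * emeasure lborel Aset"
      using sec_bound[OF Ab B'b, where x=x and k=k] VB by simp
    also have "of_nat k * emeasure lborel Aset \<le> of_nat k * ennreal (M*m)"
      using A unfolding Aset_def by (intro mult_left_mono) auto
    also have "(of_nat k :: ennreal) * ennreal (M*m) = ennreal (k*M*m)"
      using M m by (simp add: ennreal_mult ennreal_of_nat_eq_real_of_nat mult.assoc)
    finally have 1: "ennreal (2*k*M*m) \<le> emeasure lborel {h \<in> B'. \<forall>j\<in>{1..k}. x + real j *\<^sub>R h \<notin> Aset} + ennreal (k*M*m)"
      by (simp add: add_left_mono)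
    have 2: "emeasure lborel {h \<in> B'. \<forall>j\<in>{1..k}. x + real j *\<^sub>R h \<notin> Aset} \<le> ennreal (2*k*M*m)"
      unfolding VB[symmetric] by (intro emeasure_mono) (use B'b in auto)
    have "ennreal (2*k*M*m - k*M*m) \<le> emeasure lborel {h \<in> B'. \<forall>j\<in>{1..k}. x + real j *\<^sub>R h \<notin> Aset}"
      by (rule ennreal_cancel_aux[OF 1 2]) (use kM m in simp)
    then show ?thesis unfolding eq by (simp add: algebra_simps)
  qed
  have VE1: "ennreal (k*M*m) * ennreal m \<le> emeasure (lborel \<Otimes>\<^sub>M lborel) E"
  proof -
    have "ennreal (k*M*m) * ennreal m = (\<integral>\<^sup>+x. ennreal (k*M*m) * indicator K x \<partial>lborel)"
      using K m by (simp add: nn_integral_cmult_indicator)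
    also have "\<dots> \<le> (\<integral>\<^sup>+x. emeasure lborel ((\<lambda>h. (h, x)) -` E) \<partial>lborel)"
      by (intro nn_integral_mono) (auto simp: indicator_def sec)
    also have "\<dots> = emeasure (lborel \<Otimes>\<^sub>M lborel) E"
      by (rule lborel_pair.emeasure_pair_measure_alt2[OF EM, symmetric])
    finally show ?thesis .
  qed
  define G where "G h = emeasure lborel (Pair h -` E)" for h
  have VE2: "emeasure (lborel \<Otimes>\<^sub>M lborel) E = (\<integral>\<^sup>+h. G h \<partial>lborel)"
    unfolding G_def by (rule lborel.emeasure_pair_measure_alt[OF EM])
  have Gm: "G \<in> borel_measurable lborel" unfolding G_def
    by (rule lborel.measurable_emeasure_Pair[OF EM])
  define S where "S = {h \<in> B'. ennreal (m/4) \<le> G h}"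
  have B'l: "B' \<in> sets lborel" using B'b by simp
  have Sm: "S \<in> sets lborel"
  proof -
    have "{h \<in> space lborel. h \<in> B' \<and> ennreal (m/4) \<le> G h} \<in> sets lborel"
      using Gm B'l by measurable
    then show ?thesis unfolding S_def by simp
  qed
  have SB: "S \<subseteq> B'" unfolding S_def by auto
  have Gle: "G h \<le> ennreal m * indicator S h + ennreal (m/4) * indicator B' h" for h
  proof (cases "h \<in> B'")
    case False
    then have "Pair h -` E = {}" unfolding E_def by auto
    then show ?thesis unfolding G_def by simp
  next
    case True
    have "G h \<le> emeasure lborel K" unfolding G_def
      by (intro emeasure_mono) (use K in \<open>auto simp: E_def\<close>)
    then have 1: "G h \<le> ennreal m" using m by simp
    show ?thesis
    proof (cases "h \<in> S")
      case True then show ?thesis using 1 by (simp add: add_increasing2)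
    next
      case False
      then have "G h \<le> ennreal (m/4)" using \<open>h \<in> B'\<close> unfolding S_def by auto
      then show ?thesis using True False by simp
    qed
  qed
  have VE3: "(\<integral>\<^sup>+h. G h \<partial>lborel) \<le> ennreal m * emeasure lborel S + ennreal (m/4) * emeasure lborel B'"
  proof -
    have "(\<integral>\<^sup>+h. G h \<partial>lborel) \<le> (\<integral>\<^sup>+h. ennreal m * indicator S h + ennreal (m/4) * indicator B' h \<partial>lborel)"
      by (intro nn_integral_mono Gle)
    also have "\<dots> = (\<integral>\<^sup>+h. ennreal m * indicator S h \<partial>lborel) + (\<integral>\<^sup>+h. ennreal (m/4) * indicator B' h \<partial>lborel)"
      by (rule nn_integral_add) (use Sm B'l in auto)
    also have "\<dots> = ennreal m * emeasure lborel S + ennreal (m/4) * emeasure lborel B'"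
      using Sm B'l by (simp add: nn_integral_cmult_indicator)
    finally show ?thesis .
  qed
  have VS_fin: "emeasure lborel S \<le> ennreal (2*k*M*m)"
    unfolding VB[symmetric] by (rule emeasure_mono[OF SB B'l])
  obtain s where s: "emeasure lborel S = ennreal s" "s \<ge> 0"
    using VS_fin by (cases "emeasure lborel S" rule: ennreal_cases) (auto simp: top_unique)
  have s_low: "k*M*m/2 \<le> s"
  proof -
    have "ennreal (k*M*m) * ennreal m \<le> ennreal m * ennreal s + ennreal (m/4) * ennreal (2*k*M*m)"
      using VE1 VE2 VE3 VB s by simp
    also have "\<dots> = ennreal (m * s) + ennreal (m/4 * (2*k*M*m))"
    proof -
      have "ennreal m * ennreal s = ennreal (m * s)" by (rule ennreal_mult[symmetric]) (use m s in auto)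
      moreover have "ennreal (m/4) * ennreal (2*k*M*m) = ennreal (m/4 * (2*k*M*m))"
        by (rule ennreal_mult[symmetric]) (use m kM M in auto)
      ultimately show ?thesis by simp
    qed
    also have "\<dots> = ennreal (m * s + m/4 * (2*k*M*m))"
      by (rule ennreal_plus[symmetric]) (use m s kM M in auto)
    finally have "ennreal (k*M*m * m) \<le> ennreal (m * s + m/4 * (2*k*M*m))"
      using m kM M by (simp add: ennreal_mult mult.assoc)
    then have "k*M*m * m \<le> m * s + m/4 * (2*k*M*m)"
      using m s kM M by (subst (asm) ennreal_le_iff) (auto intro!: add_nonneg_nonneg mult_nonneg_nonneg)
    then have "m * (k*M*m/2) \<le> m * s" by (simp add: algebra_simps)
    then show ?thesis using m by simp
  qed
  have pt: "t/2 \<le> \<bar>fdiff k h f x\<bar>" if "x \<in> Pair h -` E" for h x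
  proof -
    from that have xK: "x \<in> K" and nA: "\<And>j. 1 \<le> j \<Longrightarrow> j \<le> k \<Longrightarrow> f (x + real j *\<^sub>R h) \<le> eps * t"
      unfolding E_def Aset_def by (auto simp: not_less)
    have "\<bar>fdiff k h f x - (-1)^k * f x\<bar> \<le> (2^k - 1) * (eps * t)"
      by (rule fdiff_main) (use nA f0 in \<open>simp add: abs_of_nonneg\<close>)
    moreover have "(2^k - 1) * (eps * t) \<le> t/2"
    proof -
      have "(2^k - 1) * eps \<le> 1/2" unfolding eps by (simp add: field_simps)
      then show ?thesis using t mult_right_mono[of "(2^k - 1) * eps" "1/2" t] by (simp add: mult.assoc)
    qed
    moreover have "\<bar>(-1)^k * f x\<bar> = f x" using f0[of x] by (simp add: abs_mult)
    moreover have "t \<le> f x" using fK xK by simp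
    ultimately show ?thesis by linarith
  qed
  define a2 where "a2 = (((t/2) powr p * (m/4)) powr (1/p)) powr q"
  have a2: "a2 \<ge> 0" unfolding a2_def by simp
  have Lp: "ennreal a2 \<le> ennpow (Lp_norm p (fdiff k h f)) q" if hS: "h \<in> S" for h
  proof -
    have PE: "Pair h -` E \<in> sets lborel" using sets_Pair1[OF EM] by simp
    have "ennreal ((t/2) powr p * (m/4)) = ennreal ((t/2) powr p) * ennreal (m/4)"
      by (rule ennreal_mult) (use m in auto)
    also have "\<dots> \<le> ennreal ((t/2) powr p) * G h"
      using hS unfolding S_def by (intro mult_left_mono) auto
    also have "\<dots> = (\<integral>\<^sup>+x. ennreal ((t/2) powr p) * indicator (Pair h -` E) x \<partial>lborel)"
      unfolding G_def using PE by (simp add: nn_integral_cmult_indicator)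
    also have "\<dots> \<le> (\<integral>\<^sup>+x. ennreal (\<bar>fdiff k h f x\<bar> powr p) \<partial>lborel)"
    proof (intro nn_integral_mono)
      fix x
      show "ennreal ((t/2) powr p) * indicator (Pair h -` E) x \<le> ennreal (\<bar>fdiff k h f x\<bar> powr p)"
      proof (cases "x \<in> Pair h -` E")
        case True
        have "(t/2) powr p \<le> \<bar>fdiff k h f x\<bar> powr p"
          using pt[OF True] t p by (intro powr_mono2) auto
        then show ?thesis using True by simp
      qed simp
    qed
    finally have I: "ennreal ((t/2) powr p * (m/4)) \<le> (\<integral>\<^sup>+x. ennreal (\<bar>fdiff k h f x\<bar> powr p) \<partial>lborel)" .
    have "ennreal (((t/2) powr p * (m/4)) powr (1/p)) \<le> Lp_norm p (fdiff k h f)"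
      unfolding Lp_norm_def by (rule ennpow_lower[OF _ _ I]) (use p m t in auto)
    then show ?thesis unfolding a2_def using ennpow_lower[OF q] by simp
  qed
  define w where "w = \<rho> powr (-(n + \<beta>*q))"
  have w: "w \<ge> 0" unfolding w_def by simp
  have wle: "ennreal w \<le> ennreal (norm h powr (-(real DIM('a) + \<beta>*q)))" if "h \<in> S" for h
  proof -
    have "0 < norm h" "norm h \<le> \<rho>" using that SB unfolding B'_def by auto
    then have "\<rho> powr (-(n + \<beta>*q)) \<le> norm h powr (-(n + \<beta>*q))"
      using n b q by (intro powr_mono2') (auto intro: order.trans[of _ 0] simp: mult_nonneg_nonneg)
    then show ?thesis unfolding w_def n_def by simp
  qed
  have "ennreal (a2 * w * (k*M*m/2)) \<le> ennreal (a2 * w) * emeasure lborel S"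
  proof -
    have "a2 * w * (k*M*m/2) \<le> a2 * w * s"
      using s_low a2 w by (intro mult_left_mono) auto
    then have "ennreal (a2 * w * (k*M*m/2)) \<le> ennreal (a2 * w * s)" by (rule ennreal_leI)
    also have "\<dots> = ennreal (a2 * w) * ennreal s" by (rule ennreal_mult) (use a2 w s in auto)
    finally show ?thesis using s by simp
  qed
  also have "\<dots> = (\<integral>\<^sup>+h. ennreal (a2 * w) * indicator S h \<partial>lborel)"
    using Sm by (simp add: nn_integral_cmult_indicator)
  also have "\<dots> \<le> (\<integral>\<^sup>+h. ennpow (Lp_norm p (fdiff k h f)) q * ennreal (norm h powr (-(real DIM('a) + \<beta>*q))) \<partial>lborel)"
  proof (intro nn_integral_mono)
    fix h
    show "ennreal (a2 * w) * indicator S h \<le> ennpow (Lp_norm p (fdiff k h f)) q * ennreal (norm h powr (-(real DIM('a) + \<beta>*q)))"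
    proof (cases "h \<in> S")
      case True
      then show ?thesis using Lp[OF True] wle[OF True] a2 w
        by (simp add: ennreal_mult mult_mono)
    qed simp
  qed
  finally have main: "ennreal (a2 * w * (k*M*m/2)) \<le> (\<integral>\<^sup>+h. ennpow (Lp_norm p (fdiff k h f)) q * ennreal (norm h powr (-(real DIM('a) + \<beta>*q))) \<partial>lborel)" .
  have arith0: "?L = (2 powr (-q) * 4 powr (-(q/p)) * (2*k*M/\<omega>) powr (-1 - \<beta>*q/n) * (k*M/2))
            * t powr q * m powr (q/p - \<beta>*q/n)" by (simp add: n_def \<omega>_def)
  have arith: "?L = a2 * w * (k*M*m/2)"
  proof -
    have t2: "(t/2) powr q = t powr q * 2 powr (-q)"
      by (simp add: powr_divide powr_minus_divide t)
    have m4: "(m/4) powr (q/p) = m powr (q/p) * 4 powr (-(q/p))"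
      by (simp add: powr_divide powr_minus_divide m)
    have "((t/2) powr p * (m/4)) powr (1/p) = ((t/2) powr p) powr (1/p) * (m/4) powr (1/p)"
      by (rule powr_mult)
    also have "((t/2) powr p) powr (1/p) = t/2"
      using p t by (simp add: powr_powr)
    finally have X: "((t/2) powr p * (m/4)) powr (1/p) = t/2 * (m/4) powr (1/p)" .
    have "a2 = (t/2 * (m/4) powr (1/p)) powr q" unfolding a2_def X by (rule refl)
    also have "\<dots> = (t/2) powr q * ((m/4) powr (1/p)) powr q"
      by (rule powr_mult)
    also have "((m/4) powr (1/p)) powr q = (m/4) powr (q/p)"
      by (simp add: powr_powr)
    finally have a2eq: "a2 = t powr q * 2 powr (-q) * (m powr (q/p) * 4 powr (-(q/p)))"
      using t2 m4 by simp
    define e where "e = -1 - \<beta>*q/n"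
    have "w = ((2*k*M/\<omega>) * m) powr (1/n * (-(n + \<beta>*q)))"
      unfolding w_def \<rho>_def by (simp add: powr_powr)
    also have "1/n * (-(n + \<beta>*q)) = e" unfolding e_def using n by (simp add: field_simps)
    also have "((2*k*M/\<omega>) * m) powr e = (2*k*M/\<omega>) powr e * m powr e"
      by (rule powr_mult)
    finally have weq: "w = (2*k*M/\<omega>) powr e * m powr e" .
    have mexp: "m powr (q/p) * m powr e * m = m powr (q/p - \<beta>*q/n)"
    proof -
      have "m powr (q/p) * m powr e * m = m powr (q/p) * m powr e * m powr 1" using m by simp
      also have "\<dots> = m powr (q/p + e + 1)" by (simp add: powr_add)
      also have "q/p + e + 1 = q/p - \<beta>*q/n" unfolding e_def by simp
      finally show ?thesis .
    qed
    show ?thesis unfolding arith0 a2eq weq e_def[symmetric] mexp[symmetric]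
      by (simp add: ac_simps)
  qed
  show ?thesis using main by (simp only: arith)
qed


lemma core_estimate:
  fixes f :: "'a::euclidean_space \<Rightarrow> real"
  assumes fm: "f \<in> borel_measurable borel" and f0: "\<And>x. f x \<ge> 0"
    and supp: "emeasure lborel {x. 0 < f x} \<le> ennreal Vs"
    and k: "k \<ge> 1" and p: "p \<ge> 1" and q: "q > 0" and b: "\<beta> \<ge> 0"
    and g: "q/p - \<beta>*q/real DIM('a) > 0"
    and eps: "eps = 1 / 2^(k+1)"
    and M: "M = (1/eps) powr (q / (q/p - \<beta>*q/real DIM('a)))"
    and c0: "c0 = 2 powr (-q) * 4 powr (-(q/p)) * (2*k*M/unit_ball_vol (real DIM('a))) powr (-1 - \<beta>*q/real DIM('a)) * (k*M/2)"
    and tt: "t > 0" and KK: "K \<in> sets borel" and fKK: "\<And>x. x \<in> K \<Longrightarrow> t \<le> f x"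
    and mm: "emeasure lborel K = ennreal m" "m > 0" and VsN: "Vs \<le> M^N * m"
  shows "ennreal (c0 * t powr q * m powr (q/p - \<beta>*q/real DIM('a)))
     \<le> (\<integral>\<^sup>+h. ennpow (Lp_norm p (fdiff k h f)) q * ennreal (norm h powr (-(real DIM('a) + \<beta>*q))) \<partial>lborel)"
proof -
  define \<gamma> where "\<gamma> = q/p - \<beta>*q/real DIM('a)"
  have "(1::real) < 2^(k+1)" by (rule one_less_power) auto
  then have eps0: "0 < eps" "eps < 1" unfolding eps by auto
  have M1: "M \<ge> 1" unfolding M using eps0 g q by (intro ge_one_powr_ge_zero) (auto simp: field_simps)
  have M0: "M > 0" using M1 by simp
  have key: "c0 * t powr q * m powr \<gamma> \<le> c0 * (eps * t) powr q * a powr \<gamma>"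
    if "t > 0" "m > 0" "M * m \<le> a" for t m a
  proof -
    have c00: "c0 \<ge> 0" unfolding c0 using M0 by simp
    have "eps powr q * M powr \<gamma> = 1"
    proof -
      have "M powr \<gamma> = (1/eps) powr q" unfolding M \<gamma>_def using g by (simp add: powr_powr)
      then show ?thesis using eps0 by (simp add: powr_divide)
    qed
    have "t powr q * m powr \<gamma> = eps powr q * t powr q * (M powr \<gamma> * m powr \<gamma>)"
      using \<open>eps powr q * M powr \<gamma> = 1\<close> by (simp add: algebra_simps)
    also have "M powr \<gamma> * m powr \<gamma> = (M * m) powr \<gamma>" by (simp add: powr_mult)
    also have "(M * m) powr \<gamma> \<le> a powr \<gamma>"
      using that M0 g unfolding \<gamma>_def by (intro powr_mono2) auto
    finally have "t powr q * m powr \<gamma> \<le> eps powr q * t powr q * a powr \<gamma>"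
      using eps0 that by (simp add: mult_left_mono)
    also have "eps powr q * t powr q = (eps * t) powr q" using eps0 that by (simp add: powr_mult)
    finally show ?thesis using c00 by (simp add: mult.assoc mult_left_mono)
  qed
  {
    fix N t K m
    assume t: "t > 0" and K: "K \<in> sets borel" and fK: "\<And>x. x \<in> K \<Longrightarrow> t \<le> f x"
      and m: "emeasure lborel K = ennreal m" "m > 0"
      and A: "emeasure lborel {x. eps * t < f x} \<le> ennreal (M * m)"
    have "ennreal (c0 * t powr q * m powr \<gamma>)
     \<le> (\<integral>\<^sup>+h. ennpow (Lp_norm p (fdiff k h f)) q * ennreal (norm h powr (-(real DIM('a) + \<beta>*q))) \<partial>lborel)"
      unfolding c0 \<gamma>_def
      by (rule direct_estimate[OF fm f0 t K fK m M0 k eps A p q b])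
  } note direct = this
  have Asub: "emeasure lborel {x. eps * t < f x} \<le> ennreal Vs" if "t > 0" for t
  proof -
    have "{x. eps * t < f x} \<subseteq> {x. 0 < f x}" using eps0 that by (auto intro: less_trans[rotated] mult_pos_pos)
    then have "emeasure lborel {x. eps * t < f x} \<le> emeasure lborel {x. 0 < f x}"
      by (intro emeasure_mono) (use fm in measurable)
    then show ?thesis using supp by simp
  qed
  have main: "\<And>t K m. t > 0 \<Longrightarrow> K \<in> sets borel \<Longrightarrow> (\<And>x. x \<in> K \<Longrightarrow> t \<le> f x) \<Longrightarrow> emeasure lborel K = ennreal m \<Longrightarrow> m > 0
     \<Longrightarrow> Vs \<le> M^N * m
     \<Longrightarrow> ennreal (c0 * t powr q * m powr (q/p - \<beta>*q/real DIM('a)))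
     \<le> (\<integral>\<^sup>+h. ennpow (Lp_norm p (fdiff k h f)) q * ennreal (norm h powr (-(real DIM('a) + \<beta>*q))) \<partial>lborel)"
    for N
  proof (induction N)
  case (0 t K m)
  show ?case
  proof (rule direct[unfolded \<gamma>_def, OF 0(1-5)])
    have "emeasure lborel {x. eps * t < f x} \<le> ennreal Vs" using Asub 0(1) .
    also have "Vs \<le> M * m" using 0(6) M1 0(5) by (simp add: mult_left_le_one_le order.trans[of _ m])
    finally show "emeasure lborel {x. eps * t < f x} \<le> ennreal (M * m)" by (simp add: ennreal_leI)
  qed
next
  case (Suc N t K m)
  show ?case
  proof (cases "emeasure lborel {x. eps * t < f x} \<le> ennreal (M * m)")
    case True
    show ?thesis using direct[unfolded \<gamma>_def, OF Suc.prems(1-5) True] .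
  next
    case False
    define A where "A = {x. eps * t < f x}"
    have Ab: "A \<in> sets borel" unfolding A_def using fm by measurable
    obtain a where VA: "emeasure lborel A = ennreal a" "a \<ge> 0"
      using Asub[OF Suc.prems(1)] unfolding A_def[symmetric]
      by (cases "emeasure lborel A" rule: ennreal_cases) (auto simp: top_unique)
    have aM: "M * m < a" using False VA unfolding A_def[symmetric]
      by (metis ennreal_leI linorder_not_le)
    have a0: "a > 0" using aM M0 Suc.prems(5) by (meson less_trans mult_pos_pos)
    have "Vs \<le> M^N * (M * m)" using Suc.prems(6) by (simp add: algebra_simps)
    also have "\<dots> \<le> M^N * a" using aM M0 by (intro mult_left_mono) auto
    finally have VsN: "Vs \<le> M^N * a" .
    have IH: "ennreal (c0 * (eps * t) powr q * a powr (q/p - \<beta>*q/real DIM('a)))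
     \<le> (\<integral>\<^sup>+h. ennpow (Lp_norm p (fdiff k h f)) q * ennreal (norm h powr (-(real DIM('a) + \<beta>*q))) \<partial>lborel)"
      by (rule Suc.IH[of "eps * t" A a]) (use eps0 Suc.prems(1) Ab VA a0 VsN in \<open>auto simp: A_def\<close>)
    have "c0 * t powr q * m powr \<gamma> \<le> c0 * (eps * t) powr q * a powr \<gamma>"
      using key[OF Suc.prems(1) Suc.prems(5)] aM by simp
    then show ?thesis using IH unfolding \<gamma>_def by (meson ennreal_leI order.trans)
  qed
  qed
  show ?thesis by (rule main[OF tt KK fKK mm(1) mm(2) VsN])
qed


lemma C0_cont:
  assumes "f \<in> C0_inf" shows "continuous_on UNIV f"
proof -
  from assms obtain S where "f \<in> S" "\<forall>g\<in>S. \<forall>x. g differentiable (at x)"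
    unfolding C0_inf_def smooth_fun_def by blast
  then have "\<And>x. f differentiable (at x)" by blast
  then show ?thesis
    by (intro continuous_at_imp_continuous_on ballI differentiable_imp_continuous_within) auto
qed

lemma C0_bdd:
  assumes "f \<in> C0_inf" shows "bounded {x. f x \<noteq> 0}"
proof -
  have "compact (closure {x. f x \<noteq> 0})" using assms unfolding C0_inf_def by blast
  then show ?thesis using compact_imp_bounded bounded_subset closure_subset by blast
qed

lemma key_cap:
  fixes \<beta> p q :: real
  assumes b: "0 < \<beta>" "\<beta> < real DIM('a::euclidean_space)"
    and q: "0 < q" and p: "1 \<le> p" and pb: "p < real DIM('a) / \<beta>"
  shows "\<exists>c>0. \<forall>(f::'a \<Rightarrow> real) K. f \<in> C0_inf \<longrightarrow> K \<in> sets borel \<longrightarrow> (\<forall>x. indicator K x \<le> f x) \<longrightarrow>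
            ennreal c * ennpow (emeasure lborel K) ((real DIM('a) - p * \<beta>) / real DIM('a))
            \<le> ennpow (besov_norm p q \<beta> f) p"
proof -
  define n where "n = real DIM('a)"
  have n: "n > 0" unfolding n_def by simp
  define k where "k = nat (1 + \<lfloor>\<beta>\<rfloor>)"
  have "0 \<le> \<lfloor>\<beta>\<rfloor>" using b by simp
  then have k: "k \<ge> 1" unfolding k_def by linarith
  define \<gamma> where "\<gamma> = q/p - \<beta>*q/n"
  have pbn: "p * \<beta> < n" using pb b unfolding n_def by (simp add: field_simps)
  have g: "\<gamma> > 0"
  proof -
    have "\<beta>/n < 1/p" using pbn p n b by (simp add: field_simps)
    then have "q * (\<beta>/n) < q * (1/p)" using q by (intro mult_strict_left_mono)
    then show ?thesis unfolding \<gamma>_def by (simp add: algebra_simps)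
  qed
  define eps :: real where "eps = 1 / 2^(k+1)"
  define M where "M = (1/eps) powr (q / \<gamma>)"
  define c0 where "c0 = 2 powr (-q) * 4 powr (-(q/p)) * (2*k*M/unit_ball_vol n) powr (-1 - \<beta>*q/n) * (k*M/2)"
  have "(1::real) < 2^(k+1)" by (rule one_less_power) auto
  then have eps0: "0 < eps" "eps < 1" unfolding eps_def by auto
  have M1: "M > 1" unfolding M_def using eps0 g q
    by (intro gr_one_powr) (auto simp: field_simps)
  have "2*k*M/unit_ball_vol n > 0" using M1 k n by (intro divide_pos_pos mult_pos_pos) auto
  then have "(2*k*M/unit_ball_vol n) powr (-1 - \<beta>*q/n) > 0" by (metis powr_gt_zero order_less_irrefl)
  moreover have "real k * M / 2 > 0" using M1 k by simp
  ultimately have c0: "c0 > 0" unfolding c0_def by (intro mult_pos_pos) auto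
  define c where "c = c0 powr (p/q)"
  have c: "c > 0" unfolding c_def using c0 by simp
  have e: "\<gamma> * (p/q) = (n - p * \<beta>)/n" unfolding \<gamma>_def using q p n by (simp add: field_simps)
  show ?thesis
  proof (intro exI[of _ c] conjI allI impI c)
    fix f :: "'a \<Rightarrow> real" and K
    assume f: "f \<in> C0_inf" and K: "K \<in> sets borel" and fK: "\<forall>x. indicator K x \<le> f x"
    have f0: "\<And>x. f x \<ge> 0" using fK by (metis indicator_pos_le order.trans)
    have f1: "\<And>x. x \<in> K \<Longrightarrow> 1 \<le> f x" using fK by (metis indicator_simps(1))
    have fm: "f \<in> borel_measurable borel" using C0_cont[OF f] by (rule borel_measurable_continuous_onI)
    have "{x \<in> space borel. f x \<noteq> 0} \<in> sets borel" using fm by measurable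
    then have S1: "{x. f x \<noteq> 0} \<in> sets lborel" by simp
    have "{x \<in> space borel. 0 < f x} \<in> sets borel" using fm by measurable
    then have S2: "{x. 0 < f x} \<in> sets lborel" by simp
    have "emeasure lborel {x. 0 < f x} \<le> emeasure lborel {x. f x \<noteq> 0}"
      by (intro emeasure_mono S1) auto
    also have "\<dots> < \<infinity>" using emeasure_bounded_finite[OF C0_bdd[OF f]] .
    finally obtain Vs where Vs: "emeasure lborel {x. 0 < f x} = ennreal Vs" "Vs \<ge> 0"
      by (cases "emeasure lborel {x. 0 < f x}" rule: ennreal_cases) auto
    have "emeasure lborel K \<le> emeasure lborel {x. 0 < f x}"
      by (intro emeasure_mono S2) (use f1 in force)
    then obtain m where m: "emeasure lborel K = ennreal m" "m \<ge> 0"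
      using Vs by (cases "emeasure lborel K" rule: ennreal_cases) (auto simp: top_unique)
    show "ennreal c * ennpow (emeasure lborel K) ((real DIM('a) - p * \<beta>) / real DIM('a))
            \<le> ennpow (besov_norm p q \<beta> f) p"
    proof (cases "m = 0")
      case True
      have "(real DIM('a) - p * \<beta>) / real DIM('a) > 0" using pbn n unfolding n_def by simp
      then show ?thesis using m True by (simp add: ennpow_0)
    next
      case False
      then have m0: "m > 0" using m by simp
      obtain N where N: "Vs / m < M^N" using real_arch_pow[OF M1] by blast
      have VsN: "Vs \<le> M^N * m" using N m0 by (simp add: field_simps)
      have core: "ennreal (c0 * 1 powr q * m powr (q/p - \<beta>*q/real DIM('a)))
         \<le> (\<integral>\<^sup>+h. ennpow (Lp_norm p (fdiff k h f)) q * ennreal (norm h powr (-(real DIM('a) + \<beta>*q))) \<partial>lborel)"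
        by (rule core_estimate[OF fm f0 _ k p q _ _ refl _ _ _ K _ m(1) m0 VsN])
           (use Vs b g f1 in \<open>auto simp: \<gamma>_def n_def M_def eps_def c0_def\<close>)
      then have core': "ennreal (c0 * m powr \<gamma>) \<le> (\<integral>\<^sup>+h. ennpow (Lp_norm p (fdiff k h f)) q * ennreal (norm h powr (-(real DIM('a) + \<beta>*q))) \<partial>lborel)"
        unfolding \<gamma>_def n_def by simp
      have "ennreal ((c0 * m powr \<gamma>) powr (1/q)) \<le> besov_norm p q \<beta> f"
        unfolding besov_norm_def k_def[symmetric]
        by (rule ennpow_lower[OF _ _ core']) (use q c0 in auto)
      then have "ennreal (((c0 * m powr \<gamma>) powr (1/q)) powr p) \<le> ennpow (besov_norm p q \<beta> f) p"
        by (intro ennpow_lower) (use p in auto)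
      also have "((c0 * m powr \<gamma>) powr (1/q)) powr p = c * m powr ((n - p * \<beta>)/n)"
      proof -
        have "((c0 * m powr \<gamma>) powr (1/q)) powr p = (c0 * m powr \<gamma>) powr (p/q)"
          by (simp add: powr_powr)
        also have "\<dots> = c0 powr (p/q) * (m powr \<gamma>) powr (p/q)" by (rule powr_mult)
        also have "(m powr \<gamma>) powr (p/q) = m powr ((n - p * \<beta>)/n)" using e by (simp add: powr_powr)
        finally show ?thesis unfolding c_def .
      qed
      finally have "ennreal (c * m powr ((n - p * \<beta>)/n)) \<le> ennpow (besov_norm p q \<beta> f) p" .
      moreover have "ennreal c * ennpow (emeasure lborel K) ((real DIM('a) - p * \<beta>) / real DIM('a))
          = ennreal (c * m powr ((n - p * \<beta>)/n))"
        unfolding m(1) n_def using m c by (simp add: ennpow_ennreal ennreal_mult)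
      ultimately show ?thesis by simp
    qed
  qed
qed


lemma ennreal_div_le:
  assumes "c > 0" "ennreal c * X \<le> Y" shows "X \<le> ennreal (1/c) * Y"
proof -
  have "ennreal (1/c) * ennreal c = 1" using assms by (simp add: ennreal_mult[symmetric])
  then have "X = ennreal (1/c) * (ennreal c * X)" by (simp add: mult.assoc[symmetric])
  also have "\<dots> \<le> ennreal (1/c) * Y" using assms(2) by (rule mult_left_mono) simp
  finally show ?thesis .
qed

lemma capK_lower:
  fixes \<beta> p q :: real
  assumes c: "\<forall>(f::'a::euclidean_space \<Rightarrow> real) K. f \<in> C0_inf \<longrightarrow> K \<in> sets borel \<longrightarrow> (\<forall>x. indicator K x \<le> f x) \<longrightarrow>
            ennreal c * ennpow (emeasure lborel K) e \<le> ennpow (besov_norm p q \<beta> f) p"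
    and K: "K \<in> sets borel"
  shows "ennreal c * ennpow (emeasure lborel (K::'a set)) e \<le> besov_capK p q \<beta> K"
  unfolding besov_capK_def using c K by (intro INF_greatest) auto

lemma open_lower:
  fixes \<beta> p q :: real
  assumes c: "\<forall>(f::'a::euclidean_space \<Rightarrow> real) K. f \<in> C0_inf \<longrightarrow> K \<in> sets borel \<longrightarrow> (\<forall>x. indicator K x \<le> f x) \<longrightarrow>
            ennreal c * ennpow (emeasure lborel K) e \<le> ennpow (besov_norm p q \<beta> f) p"
    and c0: "c > 0" and e: "e > 0"
    and W: "open W" "bounded (W::'a set)"
  shows "ennreal (c * 2 powr (-e)) * ennpow (emeasure lborel W) e \<le> besov_cap p q \<beta> W"
proof -
  have Ob: "W \<in> sets borel" using W by simp
  obtain v where v: "emeasure lborel W = ennreal v" "v \<ge> 0"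
    using emeasure_bounded_finite[OF W(2)]
    by (cases "emeasure lborel W" rule: ennreal_cases) auto
  show ?thesis
  proof (cases "v = 0")
    case True
    then show ?thesis using v e by (simp add: ennpow_0)
  next
    case False
    then have v0: "v > 0" using v by simp
    have Ol: "W \<in> sets lebesgue" using Ob by simp
    obtain T where T: "closed T" "T \<subseteq> W" "W - T \<in> lmeasurable" "emeasure lebesgue (W - T) < ennreal (v/2)"
      using sets_lebesgue_inner_closed[OF Ol, of "v/2"] v0 by auto
    have Tb: "T \<in> sets borel" using T(1) by simp
    have Tc: "compact T" using T(1,2) W(2) bounded_subset compact_eq_bounded_closed by blast
    have OT: "emeasure lborel (W - T) < ennreal (v/2)"
      using T(4) Ob Tb by simp
    have "ennreal v \<le> emeasure lborel (T \<union> (W - T))" using T(2) v by (simp add: Un_absorb1)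
    also have "\<dots> \<le> emeasure lborel T + emeasure lborel (W - T)"
      by (rule emeasure_subadditive) (use Ob Tb in auto)
    also have "\<dots> \<le> emeasure lborel T + ennreal (v/2)" using OT by (intro add_left_mono) simp
    finally have 1: "ennreal v \<le> emeasure lborel T + ennreal (v/2)" .
    have 2: "emeasure lborel T \<le> ennreal v" unfolding v(1)[symmetric] by (rule emeasure_mono[OF T(2)]) (use Ob in simp)
    have "ennreal (v - v/2) \<le> emeasure lborel T" by (rule ennreal_cancel_aux[OF 1 2]) (use v0 in simp)
    then have VT: "ennreal (v/2) \<le> emeasure lborel T" by simp
    have "ennreal ((v/2) powr e) \<le> ennpow (emeasure lborel T) e"
      by (rule ennpow_lower[OF e _ VT]) (use v0 in simp)
    moreover have "(v/2) powr e = 2 powr (-e) * v powr e"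
      by (simp add: powr_divide powr_minus_divide)
    ultimately have VTe: "ennreal (2 powr (-e)) * ennreal (v powr e) \<le> ennpow (emeasure lborel T) e"
      by (simp add: ennreal_mult)
    have capT: "ennreal c * ennpow (emeasure lborel T) e \<le> besov_capK p q \<beta> T"
      by (rule capK_lower[OF c Tb])
    have "ennreal (c * 2 powr (-e)) * ennpow (emeasure lborel W) e = ennreal c * (ennreal (2 powr (-e)) * ennreal (v powr e))"
      using v c0 by (simp add: ennpow_ennreal ennreal_mult mult.assoc)
    also have "\<dots> \<le> ennreal c * ennpow (emeasure lborel T) e"
      using VTe by (rule mult_left_mono) simp
    also have "\<dots> \<le> besov_capK p q \<beta> T" by (rule capT)
    also have "\<dots> \<le> besov_cap p q \<beta> W"
      unfolding besov_cap_def
    proof (rule INF_greatest)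
      fix U assume "U \<in> {U. open U \<and> W \<subseteq> U}"
      then have "T \<subseteq> U" using T(2) by auto
      then show "besov_capK p q \<beta> T \<le> (SUP K\<in>{K. compact K \<and> K \<subseteq> U}. besov_capK p q \<beta> K)"
        using Tc by (intro SUP_upper) auto
    qed
    finally show ?thesis .
  qed
qed

theorem theorem4p2:
  fixes \<beta> p q q0 :: real
  assumes "0 < \<beta>" "\<beta> < real DIM('a::euclidean_space)"
    and "0 < q" and "1 \<le> p" and "p < real DIM('a) / \<beta>" and "0 < q0"
  shows "((\<exists>C>0. \<forall>f::'a \<Rightarrow> real. f \<in> C0_inf \<longrightarrow>
             lorentz_norm (real DIM('a) * p / (real DIM('a) - p * \<beta>)) q0
                (emeasure lborel) f
             \<le> ennreal C * lorentz_norm p q0 (besov_cap p q \<beta>) f)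
          \<longleftrightarrow>
          (\<exists>C>0. \<forall>U::'a set. smooth_bdd_domain U \<longrightarrow>
             ennpow (emeasure lborel U) ((real DIM('a) - p * \<beta>) / real DIM('a))
             \<le> ennreal C * besov_capK p q \<beta> (closure U)))
       \<and> (p \<le> q \<longrightarrow>
          (\<exists>C>0. \<forall>f::'a \<Rightarrow> real. f \<in> C0_inf \<longrightarrow>
             lorentz_norm (real DIM('a) * p / (real DIM('a) - p * \<beta>)) q0
                (emeasure lborel) f
             \<le> ennreal C * lorentz_norm p q0 (besov_cap p q \<beta>) f)
          \<and>
          (\<exists>C>0. \<forall>U::'a set. smooth_bdd_domain U \<longrightarrow>
             ennpow (emeasure lborel U) ((real DIM('a) - p * \<beta>) / real DIM('a))
             \<le> ennreal C * besov_capK p q \<beta> (closure U)))"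
proof -
  define n where "n = real DIM('a)"
  have n: "n > 0" unfolding n_def by simp
  obtain c where c0: "c > 0" and c: "\<forall>(f::'a \<Rightarrow> real) K. f \<in> C0_inf \<longrightarrow> K \<in> sets borel \<longrightarrow> (\<forall>x. indicator K x \<le> f x) \<longrightarrow>
            ennreal c * ennpow (emeasure lborel K) ((real DIM('a) - p * \<beta>) / real DIM('a))
            \<le> ennpow (besov_norm p q \<beta> f) p"
    using key_cap[OF assms(1-5)] by blast
  define e where "e = (real DIM('a) - p * \<beta>) / real DIM('a)"
  have pbn: "p * \<beta> < n" using assms(1,5) unfolding n_def by (simp add: field_simps)
  have e0: "e > 0" unfolding e_def n_def[symmetric] using pbn n by simp
  have II: "\<exists>C>0. \<forall>U::'a set. smooth_bdd_domain U \<longrightarrow>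
             ennpow (emeasure lborel U) ((real DIM('a) - p * \<beta>) / real DIM('a))
             \<le> ennreal C * besov_capK p q \<beta> (closure U)"
  proof (intro exI[of _ "1/c"] conjI allI impI)
    show "1/c > 0" using c0 by simp
    fix U :: "'a set"
    have cl: "closure U \<in> sets borel" by simp
    have "ennpow (emeasure lborel U) e \<le> ennpow (emeasure lborel (closure U)) e"
      by (intro ennpow_mono e0 emeasure_mono closure_subset) (use cl in simp)
    then have "ennreal c * ennpow (emeasure lborel U) e \<le> ennreal c * ennpow (emeasure lborel (closure U)) e"
      by (rule mult_left_mono) simp
    also have "\<dots> \<le> besov_capK p q \<beta> (closure U)"
      unfolding e_def by (rule capK_lower[OF c cl])
    finally show "ennpow (emeasure lborel U) ((real DIM('a) - p * \<beta>) / real DIM('a)) \<le> ennreal (1/c) * besov_capK p q \<beta> (closure U)"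
      unfolding e_def[symmetric] by (rule ennreal_div_le[OF c0])
  qed
  define c' where "c' = c * 2 powr (-e)"
  have c'0: "c' > 0" unfolding c'_def using c0 by simp
  define D where "D = (1/c') powr (q0/p)"
  have D0: "D > 0" unfolding D_def using c'0 by simp
  have I: "\<exists>C>0. \<forall>f::'a \<Rightarrow> real. f \<in> C0_inf \<longrightarrow>
             lorentz_norm (real DIM('a) * p / (real DIM('a) - p * \<beta>)) q0
                (emeasure lborel) f
             \<le> ennreal C * lorentz_norm p q0 (besov_cap p q \<beta>) f"
  proof (intro exI[of _ "D powr (1/q0)"] conjI allI impI)
    show "D powr (1/q0) > 0" using D0 by simp
    fix f :: "'a \<Rightarrow> real" assume f: "f \<in> C0_inf"
    have fc: "continuous_on UNIV f" by (rule C0_cont[OF f])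
    have pw: "ennpow (emeasure lborel {x. \<bar>f x\<bar> > t}) (q0 / (real DIM('a) * p / (real DIM('a) - p * \<beta>)))
          \<le> ennreal D * ennpow (besov_cap p q \<beta> {x. \<bar>f x\<bar> > t}) (q0 / p)" if t: "t > 0" for t
    proof -
      define W where "W = {x. \<bar>f x\<bar> > t}"
      have Wo: "open W" unfolding W_def
        by (rule open_Collect_less) (use fc in \<open>auto intro: continuous_intros\<close>)
      have Wb: "bounded W" using C0_bdd[OF f] unfolding W_def
        by (rule bounded_subset) (use t in auto)
      have "ennreal c' * ennpow (emeasure lborel W) e \<le> besov_cap p q \<beta> W"
        unfolding c'_def by (rule open_lower[OF c[folded e_def] c0 e0 Wo Wb])
      then have 1: "ennpow (emeasure lborel W) e \<le> ennreal (1/c') * besov_cap p q \<beta> W"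
        by (rule ennreal_div_le[OF c'0])
      have ex: "q0 / (real DIM('a) * p / (real DIM('a) - p * \<beta>)) = e * (q0/p)"
        unfolding e_def using n assms(4) pbn unfolding n_def[symmetric] by (simp add: field_simps)
      have "ennpow (emeasure lborel W) (q0 / (real DIM('a) * p / (real DIM('a) - p * \<beta>)))
          = ennpow (ennpow (emeasure lborel W) e) (q0/p)"
        unfolding ex using e0 assms(4,6) by (simp add: ennpow_ennpow)
      also have "\<dots> \<le> ennpow (ennreal (1/c') * besov_cap p q \<beta> W) (q0/p)"
        using 1 assms(4,6) by (intro ennpow_mono) auto
      also have "\<dots> = ennreal D * ennpow (besov_cap p q \<beta> W) (q0/p)"
        unfolding D_def using c'0 assms(4,6) by (intro ennpow_mult) auto
      finally show ?thesis unfolding W_def .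
    qed
    let ?F1 = "\<lambda>t. ennpow (emeasure lborel {x. \<bar>f x\<bar> > t}) (q0 / (real DIM('a) * p / (real DIM('a) - p * \<beta>)))
                 * ennreal (q0 * t powr (q0 - 1))"
    let ?F2 = "\<lambda>t. ennpow (besov_cap p q \<beta> {x. \<bar>f x\<bar> > t}) (q0 / p) * ennreal (q0 * t powr (q0 - 1))"
    have "(\<integral>\<^sup>+t \<in> {0<..}. ?F1 t \<partial>lborel) \<le> (\<integral>\<^sup>+t. ennreal D * (?F2 t * indicator {0<..} t) \<partial>lborel)"
    proof (intro nn_integral_mono)
      fix t :: real
      show "?F1 t * indicator {0<..} t \<le> ennreal D * (?F2 t * indicator {0<..} t)"
      proof (cases "t > 0")
        case True
        then show ?thesis using pw[OF True]
          by (simp add: mult.assoc[symmetric] mult_right_mono)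
      qed simp
    qed
    also have "\<dots> \<le> ennreal D * (\<integral>\<^sup>+t \<in> {0<..}. ?F2 t \<partial>lborel)"
      by (rule nn_integral_cmult_le) (use D0 in simp)
    finally have int: "(\<integral>\<^sup>+t \<in> {0<..}. ?F1 t \<partial>lborel) \<le> ennreal D * (\<integral>\<^sup>+t \<in> {0<..}. ?F2 t \<partial>lborel)" .
    have "lorentz_norm (real DIM('a) * p / (real DIM('a) - p * \<beta>)) q0 (emeasure lborel) f
        = ennpow (\<integral>\<^sup>+t \<in> {0<..}. ?F1 t \<partial>lborel) (1/q0)"
      unfolding lorentz_norm_def ..
    also have "\<dots> \<le> ennpow (ennreal D * (\<integral>\<^sup>+t \<in> {0<..}. ?F2 t \<partial>lborel)) (1/q0)"
      using int assms(6) by (intro ennpow_mono) auto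
    also have "\<dots> = ennreal (D powr (1/q0)) * ennpow (\<integral>\<^sup>+t \<in> {0<..}. ?F2 t \<partial>lborel) (1/q0)"
      using D0 assms(6) by (intro ennpow_mult) auto
    also have "ennpow (\<integral>\<^sup>+t \<in> {0<..}. ?F2 t \<partial>lborel) (1/q0) = lorentz_norm p q0 (besov_cap p q \<beta>) f"
      unfolding lorentz_norm_def ..
    finally show "lorentz_norm (real DIM('a) * p / (real DIM('a) - p * \<beta>)) q0 (emeasure lborel) f
        \<le> ennreal (D powr (1/q0)) * lorentz_norm p q0 (besov_cap p q \<beta>) f" .
  qed
  show ?thesis using I II by blast
qed

end
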